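(* For all integers $p,q\ge 2$, $\chi_s(K_p^+\,\square\,K_q^-)=\left\lceil \frac{pq}{2}\right\rceil$.
   Context: A signed graph $(G,\sigma)$ is a simple loopless undirected graph with a signature $\sigma:E(G)\to\{+1,-1\}$. Switching a vertex negates the signs of its incident edges; two signatures are equivalent if one is obtained from the other by switching a set of vertices. A homomorphism of $(G,\sigma)$ to $(H,\pi)$ is a graph homomorphism $\varphi:G\to H$ for which there is a signature $\sigma'$ equivalent to $\sigma$ with $\pi(\varphi(u)\varphi(v))=\sigma'(uv)$ for every edge $uv$; $\chi_s(G,\sigma)$ is the smallest order of a signed graph to which $(G,\sigma)$ admits a homomorphism. $K_p^+$ (resp. $K_q^-$) is the complete graph on $p$ (resp. $q$) vertices with all edges positive (resp. negative). The Cartesian product $(G,\sigma)\,\square\,(H,\pi)$ is the signed graph on $G\,\square\,H$ where $(u,v_1)(u,v_2)$ has sign $\pi(v_1v_2)$ and $(u_1,v)(u_2,v)$ has sign $\sigma(u_1u_2)$. *)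

theory Defs
  imports Complex_Main
begin

record 'a sgraph =
  verts :: "'a set"
  arcs  :: "('a \<times> 'a) set"
  sgn   :: "'a \<Rightarrow> 'a \<Rightarrow> int"

definition signed_graph :: "('a, 'b) sgraph_scheme \<Rightarrow> bool" where
  "signed_graph G \<longleftrightarrow>
     finite (verts G) \<and> arcs G \<subseteq> verts G \<times> verts G \<and>
     (\<forall>u v. (u, v) \<in> arcs G \<longrightarrow> (v, u) \<in> arcs G) \<and>
     (\<forall>u. (u, u) \<notin> arcs G) \<and>
     (\<forall>u v. (u, v) \<in> arcs G \<longrightarrow> sgn G u v \<in> {1, -1} \<and> sgn G u v = sgn G v u)"

definition switch :: "'a set \<Rightarrow> ('a \<Rightarrow> 'a \<Rightarrow> int) \<Rightarrow> 'a \<Rightarrow> 'a \<Rightarrow> int" where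
  "switch X \<sigma> u v = (if (u \<in> X) \<noteq> (v \<in> X) then - \<sigma> u v else \<sigma> u v)"

definition sg_hom :: "'a sgraph \<Rightarrow> 'b sgraph \<Rightarrow> ('a \<Rightarrow> 'b) \<Rightarrow> bool" where
  "sg_hom G H \<phi> \<longleftrightarrow>
     \<phi> ` verts G \<subseteq> verts H \<and>
     (\<forall>u v. (u, v) \<in> arcs G \<longrightarrow> (\<phi> u, \<phi> v) \<in> arcs H) \<and>
     (\<exists>X \<subseteq> verts G. \<forall>u v. (u, v) \<in> arcs G \<longrightarrow>
         sgn H (\<phi> u) (\<phi> v) = switch X (sgn G) u v)"

text \<open>Signed chromatic number: least order of a signed graph admitting a homomorphism
  from G (target graphs are taken with vertices in nat, which loses no generality
  for finite graphs).\<close>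
definition chi_s :: "'a sgraph \<Rightarrow> nat" where
  "chi_s G = (LEAST n. \<exists>(H :: nat sgraph) \<phi>.
       signed_graph H \<and> card (verts H) = n \<and> sg_hom G H \<phi>)"

definition Kcomp :: "nat \<Rightarrow> int \<Rightarrow> nat sgraph" where
  "Kcomp p s = \<lparr> verts = {0..<p}, arcs = {(i, j). i < p \<and> j < p \<and> i \<noteq> j},
                 sgn = (\<lambda>_ _. s) \<rparr>"

definition cprod :: "'a sgraph \<Rightarrow> 'b sgraph \<Rightarrow> ('a \<times> 'b) sgraph" where
  "cprod G H = \<lparr> verts = verts G \<times> verts H,
     arcs = {((u1, v1), (u2, v2)).
               (u1 = u2 \<and> u1 \<in> verts G \<and> (v1, v2) \<in> arcs H) \<or>
               (v1 = v2 \<and> v1 \<in> verts H \<and> (u1, u2) \<in> arcs G)},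
     sgn = (\<lambda>(u1, v1) (u2, v2). if u1 = u2 then sgn H v1 v2 else sgn G u1 u2) \<rparr>"

end

theory Submission
  imports Defs
begin

abbreviation Gpq :: "nat \<Rightarrow> nat \<Rightarrow> (nat \<times> nat) sgraph" where
  "Gpq p q \<equiv> cprod (Kcomp p 1) (Kcomp q (-1))"

lemma verts_G: "verts (Gpq p q) = {0..<p} \<times> {0..<q}"
  by (simp add: cprod_def Kcomp_def)

lemma arcs_G: "((a,b),(c,d)) \<in> arcs (Gpq p q) \<longleftrightarrow> a<p \<and> b<q \<and> c<p \<and> d<q \<and> ((a=c) \<noteq> (b=d))"
  by (auto simp add: cprod_def Kcomp_def)

lemma sgn_G: "sgn (Gpq p q) (a,b) (c,d) = (if a = c then -1 else 1)"
  by (simp add: cprod_def Kcomp_def)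

definition adj :: "nat \<Rightarrow> nat \<Rightarrow> nat \<Rightarrow> nat \<Rightarrow> nat \<Rightarrow> nat \<Rightarrow> bool" where
  "adj p q a b c d \<longleftrightarrow> a<p \<and> b<q \<and> c<p \<and> d<q \<and> ((a=c) \<noteq> (b=d))"

definition sw :: "(nat \<Rightarrow> nat \<Rightarrow> int) \<Rightarrow> nat \<Rightarrow> nat \<Rightarrow> nat \<Rightarrow> nat \<Rightarrow> int" where
  "sw s a b c d = (if a = c then -1 else 1) * s a b * s c d"

definition good :: "nat \<Rightarrow> nat \<Rightarrow> nat \<Rightarrow> (nat \<Rightarrow> nat \<Rightarrow> nat) \<Rightarrow> (nat \<Rightarrow> nat \<Rightarrow> int) \<Rightarrow> bool" where
  "good p q N \<phi> s \<longleftrightarrow>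
    (\<forall>i j. i<p \<longrightarrow> j<q \<longrightarrow> \<phi> i j < N \<and> (s i j = 1 \<or> s i j = -1)) \<and>
    (\<forall>i j i' j'. i<p \<longrightarrow> j<q \<longrightarrow> i'<p \<longrightarrow> j'<q \<longrightarrow> (i,j)\<noteq>(i',j') \<longrightarrow> \<phi> i j = \<phi> i' j' \<longrightarrow>
        i\<noteq>i' \<and> j\<noteq>j' \<and> s i j = - s i' j') \<and>
    (\<forall>a b c d a' b' c' d'. adj p q a b c d \<longrightarrow> adj p q a' b' c' d' \<longrightarrow> \<phi> a b = \<phi> a' b' \<longrightarrow>
        \<phi> c d = \<phi> c' d' \<longrightarrow> sw s a b c d = sw s a' b' c' d')"

lemma good_transpose:
  assumes g: "good p q N \<phi> s"
  shows "good q p N (\<lambda>i j. \<phi> j i) (\<lambda>i j. s j i)"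
proof -
  have g1: "\<And>i j. i<p \<Longrightarrow> j<q \<Longrightarrow> \<phi> i j < N \<and> (s i j = 1 \<or> s i j = -1)"
   and g2: "\<And>i j i' j'. i<p \<Longrightarrow> j<q \<Longrightarrow> i'<p \<Longrightarrow> j'<q \<Longrightarrow> (i,j)\<noteq>(i',j') \<Longrightarrow> \<phi> i j = \<phi> i' j' \<Longrightarrow>
        i\<noteq>i' \<and> j\<noteq>j' \<and> s i j = - s i' j'"
   and g3: "\<And>a b c d a' b' c' d'. adj p q a b c d \<Longrightarrow> adj p q a' b' c' d' \<Longrightarrow> \<phi> a b = \<phi> a' b' \<Longrightarrow>
        \<phi> c d = \<phi> c' d' \<Longrightarrow> sw s a b c d = sw s a' b' c' d'"
    using g unfolding good_def by blast+
  have sw_t: "sw (\<lambda>i j. s j i) a b c d = - sw s b a d c" if "adj q p a b c d" for a b c d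
    using that by (auto simp: sw_def adj_def)
  have adj_t: "adj q p a b c d \<Longrightarrow> adj p q b a d c" for a b c d
    by (auto simp: adj_def)
  have h1: "\<phi> j i < N \<and> (s j i = 1 \<or> s j i = -1)" if "i<q" "j<p" for i j
    using g1 that by blast
  have h2: "i\<noteq>i' \<and> j\<noteq>j' \<and> s j i = - s j' i'"
    if "i<q" "j<p" "i'<q" "j'<p" "(i,j)\<noteq>(i',j')" "\<phi> j i = \<phi> j' i'" for i j i' j'
  proof -
    have "(j,i)\<noteq>(j',i')" using that(5) by auto
    then show ?thesis using g2[OF that(2,1,4,3)] that(6) by blast
  qed
  have h3: "sw (\<lambda>i j. s j i) a b c d = sw (\<lambda>i j. s j i) a' b' c' d'"
    if "adj q p a b c d" "adj q p a' b' c' d'" "\<phi> b a = \<phi> b' a'" "\<phi> d c = \<phi> d' c'" for a b c d a' b' c' d'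
    using sw_t[OF that(1)] sw_t[OF that(2)] g3[OF adj_t[OF that(1)] adj_t[OF that(2)] that(3,4)] by simp
  have c1: "\<forall>i j. i<q \<longrightarrow> j<p \<longrightarrow> \<phi> j i < N \<and> (s j i = 1 \<or> s j i = -1)"
    using h1 by blast
  have c2: "\<forall>i j i' j'. i<q \<longrightarrow> j<p \<longrightarrow> i'<q \<longrightarrow> j'<p \<longrightarrow> (i,j)\<noteq>(i',j') \<longrightarrow> \<phi> j i = \<phi> j' i' \<longrightarrow>
        i\<noteq>i' \<and> j\<noteq>j' \<and> s j i = - s j' i'"
    using h2 by blast
  have c3: "\<forall>a b c d a' b' c' d'. adj q p a b c d \<longrightarrow> adj q p a' b' c' d' \<longrightarrow> \<phi> b a = \<phi> b' a' \<longrightarrow>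
        \<phi> d c = \<phi> d' c' \<longrightarrow> sw (\<lambda>i j. s j i) a b c d = sw (\<lambda>i j. s j i) a' b' c' d'"
    using h3 by blast
  show ?thesis unfolding good_def using c1 c2 c3 by (intro conjI)
qed

lemma sw_sym: "sw s a b c d = sw s c d a b"
  by (simp add: sw_def)

lemma good_ext:
  assumes g: "good p q N \<phi> s" and p2: "2 \<le> p"
  shows "good p (q+2) (N+p)
    (\<lambda>i j. if j<q then \<phi> i j else if j=q then N+i else N + (if i = 0 then p - 1 else i - 1))
    (\<lambda>i j. if j<q then s i j else if j=q then 1 else -1)" (is "good _ _ _ ?f ?t")
proof -
  have g1: "\<And>i j. i<p \<Longrightarrow> j<q \<Longrightarrow> \<phi> i j < N \<and> (s i j = 1 \<or> s i j = -1)"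
   and g2: "\<And>i j i' j'. i<p \<Longrightarrow> j<q \<Longrightarrow> i'<p \<Longrightarrow> j'<q \<Longrightarrow> (i,j)\<noteq>(i',j') \<Longrightarrow> \<phi> i j = \<phi> i' j' \<Longrightarrow>
        i\<noteq>i' \<and> j\<noteq>j' \<and> s i j = - s i' j'"
   and g3: "\<And>a b c d a' b' c' d'. adj p q a b c d \<Longrightarrow> adj p q a' b' c' d' \<Longrightarrow> \<phi> a b = \<phi> a' b' \<Longrightarrow>
        \<phi> c d = \<phi> c' d' \<Longrightarrow> sw s a b c d = sw s a' b' c' d'"
    using g unfolding good_def by blast+
  have P1: "?f i j < N+p \<and> (?t i j = 1 \<or> ?t i j = -1)" if "i<p" "j<q+2" for i j
    using g1[of i j] that p2 by auto
  have lowq: "?f i j < N \<longleftrightarrow> j < q" if "i<p" for i j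
    using g1[of i j] that by auto
  have P2: "i\<noteq>i' \<and> j\<noteq>j' \<and> ?t i j = - ?t i' j'"
    if "i<p" "j<q+2" "i'<p" "j'<q+2" "(i,j)\<noteq>(i',j')" "?f i j = ?f i' j'" for i j i' j'
  proof (cases "j<q")
    case True
    then have "j'<q" using lowq[of i j] lowq[of i' j'] that by metis
    then show ?thesis using g2[of i j i' j'] that True by simp
  next
    case False
    then have "\<not> j'<q" using lowq[of i j] lowq[of i' j'] that by metis
    then show ?thesis using that False p2 by (auto split: if_splits)
  qed
  have NN: "sw ?t a b c d = 1" if "adj p (q+2) a b c d" "\<not> b<q" "\<not> d<q" for a b c d
    using that by (auto simp: adj_def sw_def)
  have ON: "a = c \<and> sw ?t a b c d = - s a b * ?t c d" if "adj p (q+2) a b c d" "b<q" "\<not> d<q" for a b c d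
    using that by (auto simp: adj_def sw_def)
  have P3: "sw ?t a b c d = sw ?t a' b' c' d'"
    if A: "adj p (q+2) a b c d" and A': "adj p (q+2) a' b' c' d'" and E1: "?f a b = ?f a' b'"
      and E2: "?f c d = ?f c' d'" for a b c d a' b' c' d'
  proof -
    have r: "a<p" "b<q+2" "c<p" "d<q+2" "a'<p" "b'<q+2" "c'<p" "d'<q+2"
      using A A' by (auto simp: adj_def)
    have bb: "b<q \<longleftrightarrow> b'<q" using lowq[OF r(1), of b] lowq[OF r(5), of b'] unfolding E1 by blast
    have dd: "d<q \<longleftrightarrow> d'<q" using lowq[OF r(3), of d] lowq[OF r(7), of d'] unfolding E2 by blast
    have mixed: "sw ?t a b c d = sw ?t a' b' c' d'"
      if A: "adj p (q+2) a b c d" and A': "adj p (q+2) a' b' c' d'" and E1: "?f a b = ?f a' b'"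
      and E2: "?f c d = ?f c' d'" and "b<q" "\<not> d<q" "b'<q" "\<not> d'<q" for a b c d a' b' c' d'
    proof -
      note bq = that(5) and dq = that(6) and bq' = that(7) and dq' = that(8)
      have r: "a<p" "b<q+2" "c<p" "d<q+2" "a'<p" "b'<q+2" "c'<p" "d'<q+2"
        using A A' unfolding adj_def by simp_all
      have o1: "a = c \<and> sw ?t a b c d = - s a b * ?t c d" by (rule ON[OF A bq dq])
      have o2: "a' = c' \<and> sw ?t a' b' c' d' = - s a' b' * ?t c' d'" by (rule ON[OF A' bq' dq'])
      show ?thesis
      proof (cases "(a,b) = (a',b')")
        case True
        then have aa: "a = a'" by simp
        have "(c,d) = (c',d')"
        proof (rule ccontr)
          assume ne: "(c,d) \<noteq> (c',d')"
          have "c \<noteq> c'" using P2[OF r(3) r(4) r(7) r(8) ne E2] by blast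
          then show False using o1 o2 aa by simp
        qed
        then show ?thesis using True by simp
      next
        case False
        have x: "a \<noteq> a' \<and> b \<noteq> b' \<and> ?t a b = - ?t a' b'" by (rule P2[OF r(1) r(2) r(5) r(6) False E1])
        then have x2: "s a b = - s a' b'" using bq bq' by simp
        have ne: "(c,d) \<noteq> (c',d')" using o1 o2 x by auto
        have tcd: "?t c d = - ?t c' d'" using P2[OF r(3) r(4) r(7) r(8) ne E2] by blast
        have o1b: "sw ?t a b c d = - s a b * ?t c d" using o1 by (rule conjunct2)
        have o2b: "sw ?t a' b' c' d' = - s a' b' * ?t c' d'" using o2 by (rule conjunct2)
        show ?thesis
          by (simp only: o1b o2b) (simp only: x2 tcd mult_minus_left mult_minus_right minus_minus)
      qed
    qed
    show ?thesis
    proof (cases "b<q")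
      case True
      show ?thesis
      proof (cases "d<q")
        case True2: True
        have "adj p q a b c d" "adj p q a' b' c' d'" using A A' True True2 bb dd by (auto simp: adj_def)
        moreover have "\<phi> a b = \<phi> a' b'" "\<phi> c d = \<phi> c' d'" using E1 E2 True True2 bb dd by auto
        ultimately have "sw s a b c d = sw s a' b' c' d'" using g3 by blast
        then show ?thesis using True True2 bb dd by (simp add: sw_def)
      next
        case False
        then show ?thesis using mixed[OF A A' E1 E2] True bb dd by blast
      qed
    next
      case False
      show ?thesis
      proof (cases "d<q")
        case True2: True
        have As: "adj p (q+2) c d a b" "adj p (q+2) c' d' a' b'" using A A' by (auto simp: adj_def)
        have "sw ?t c d a b = sw ?t c' d' a' b'"
          by (rule mixed[OF As E2 E1]) (use True2 False bb dd in auto)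
        then show ?thesis by (simp only: sw_sym[of ?t a b] sw_sym[of ?t a' b'])
      next
        case False2: False
        then show ?thesis using NN[OF A] NN[OF A'] False bb dd by simp
      qed
    qed
  qed
  have c1: "\<forall>i j. i<p \<longrightarrow> j<q+2 \<longrightarrow> ?f i j < N+p \<and> (?t i j = 1 \<or> ?t i j = -1)"
    using P1 by blast
  have c2: "\<forall>i j i' j'. i<p \<longrightarrow> j<q+2 \<longrightarrow> i'<p \<longrightarrow> j'<q+2 \<longrightarrow> (i,j)\<noteq>(i',j') \<longrightarrow> ?f i j = ?f i' j' \<longrightarrow>
        i\<noteq>i' \<and> j\<noteq>j' \<and> ?t i j = - ?t i' j'"
    using P2 by blast
  have c3: "\<forall>a b c d a' b' c' d'. adj p (q+2) a b c d \<longrightarrow> adj p (q+2) a' b' c' d' \<longrightarrow> ?f a b = ?f a' b' \<longrightarrow>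
        ?f c d = ?f c' d' \<longrightarrow> sw ?t a b c d = sw ?t a' b' c' d'"
    using P3 by blast
  show ?thesis unfolding good_def using c1 c2 c3 by (intro conjI)
qed


lemma all3: "(\<forall>a<(3::nat). P a) \<longleftrightarrow> P 0 \<and> P (Suc 0) \<and> P (Suc (Suc 0))"
  by (auto simp: less_Suc_eq numeral_eq_Suc)

definition phi3 :: "nat \<Rightarrow> nat \<Rightarrow> nat" where
  "phi3 i j = [[4,0,1],[2,3,0],[3,1,2::nat]] ! i ! j"
definition s3 :: "nat \<Rightarrow> nat \<Rightarrow> int" where
  "s3 i j = [[1,1,1],[1,1,-1],[-1,-1,-1::int]] ! i ! j"
definition F3 :: "nat \<Rightarrow> nat \<Rightarrow> int" where
  "F3 x y = [[0, -1, 1, 1, -1], [-1, 0, -1, -1, -1], [1, -1, 0, -1, 1], [1, -1, -1, 0, -1], [-1, -1, 1, -1, 0::int]] ! x ! y"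

lemma base3_F: "\<forall>a<3. \<forall>b<3. \<forall>c<3. \<forall>d<3. ((a=c) \<noteq> (b=d)) \<longrightarrow> sw s3 a b c d = F3 (phi3 a b) (phi3 c d)"
  unfolding all3 by (simp only: nth_Cons_0 nth_Cons_Suc sw_def s3_def F3_def phi3_def) (simp add: sw_def s3_def F3_def phi3_def)

lemma base3_fib: "\<forall>i<3. \<forall>j<3. \<forall>i'<3. \<forall>j'<3. (i,j)\<noteq>(i',j') \<longrightarrow> phi3 i j = phi3 i' j' \<longrightarrow>
        i\<noteq>i' \<and> j\<noteq>j' \<and> s3 i j = - s3 i' j'"
  unfolding all3 by (simp only: nth_Cons_0 nth_Cons_Suc sw_def s3_def F3_def phi3_def) (simp add: s3_def phi3_def)

lemma base3_1: "\<forall>i<3. \<forall>j<3. phi3 i j < 5 \<and> (s3 i j = 1 \<or> s3 i j = -1)"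
  unfolding all3 by (simp only: nth_Cons_0 nth_Cons_Suc sw_def s3_def F3_def phi3_def) (simp add: s3_def phi3_def)

lemma good33: "good 3 3 5 phi3 s3"
proof -
  have "sw s3 a b c d = F3 (phi3 a b) (phi3 c d)" if "adj 3 3 a b c d" for a b c d
    using base3_F that unfolding adj_def by blast
  then have "sw s3 a b c d = sw s3 a' b' c' d'" if "adj 3 3 a b c d" "adj 3 3 a' b' c' d'" "phi3 a b = phi3 a' b'"
        "phi3 c d = phi3 c' d'" for a b c d a' b' c' d' using that by metis
  then show ?thesis unfolding good_def using base3_fib base3_1 by blast
qed


lemma good_0: "good p 0 0 \<phi> s"
  by (simp add: good_def adj_def)

lemma good_0': "good 0 q 0 \<phi> s"
  by (simp add: good_def adj_def)

lemma good_col: "good p q N \<phi> s \<Longrightarrow> 2 \<le> p \<Longrightarrow> \<exists>\<phi>' s'. good p (q + 2*k) (N + p*k) \<phi>' s'"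
proof (induction k arbitrary: \<phi> s q N)
  case 0 then show ?case by auto
next
  case (Suc k)
  then obtain \<phi>' s' where "good p (q+2*k) (N+p*k) \<phi>' s'" by blast
  from good_ext[OF this Suc.prems(2)] show ?case
    by (metis (no_types, lifting) add.assoc mult_Suc_right add.commute mult_2 add_Suc_right)
qed

lemma good_row: "good p q N \<phi> s \<Longrightarrow> 2 \<le> q \<Longrightarrow> \<exists>\<phi>' s'. good (p + 2*k) q (N + q*k) \<phi>' s'"
proof -
  assume "good p q N \<phi> s" "2 \<le> q"
  from good_col[OF good_transpose[OF this(1)] this(2)]
  obtain \<phi>' s' where "good q (p + 2*k) (N + q*k) \<phi>' s'" by blast
  from good_transpose[OF this] show ?thesis by blast
qed

lemma good_all:
  assumes "2 \<le> p" "2 \<le> q"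
  shows "\<exists>\<phi> s. good p q ((p*q+1) div 2) \<phi> s"
proof (cases "even q")
  case True
  then obtain k where k: "q = 0 + 2*k" by auto
  have "(p*q+1) div 2 = 0 + p*k" using k by simp
  with good_col[OF good_0 assms(1), of k] k show ?thesis by metis
next
  case oq: False
  show ?thesis
  proof (cases "even p")
    case True
    then obtain k where k: "p = 0 + 2*k" by auto
    have "(p*q+1) div 2 = 0 + q*k" using k by simp
    with good_row[OF good_0' assms(2), of k] k show ?thesis by metis
  next
    case False
    have ep: "even (p-3)" using False assms by presburger
    have eq: "even (q-3)" using oq assms by presburger
    obtain k where "p-3 = 2*k" using ep by (blast elim: evenE)
    obtain l where "q-3 = 2*l" using eq by (blast elim: evenE)
    then have k: "p = 3 + 2*k" and l: "q = 3 + 2*l" using False oq assms \<open>p-3 = 2*k\<close> by presburger+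
    from good_col[OF good33, of l] obtain \<phi> s where "good 3 (3+2*l) (5+3*l) \<phi> s" by auto
    from good_row[OF this, of k] obtain \<phi>' s' where "good (3+2*k) (3+2*l) (5+3*l + (3+2*l)*k) \<phi>' s'" by auto
    moreover have "p*q+1 = 2*(5+3*l + (3+2*l)*k)" using k l by (simp add: algebra_simps)
    then have "5+3*l + (3+2*l)*k = (p*q+1) div 2" by simp
    ultimately show ?thesis using k l by auto
  qed
qed


lemma hom_from_good:
  assumes g: "good p q N \<phi> s"
  shows "\<exists>(H::nat sgraph) \<psi>. signed_graph H \<and> card (verts H) = N \<and> sg_hom (Gpq p q) H \<psi>"
proof -
  have g1: "\<And>i j. i<p \<Longrightarrow> j<q \<Longrightarrow> \<phi> i j < N \<and> (s i j = 1 \<or> s i j = -1)"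
   and g2: "\<And>i j i' j'. i<p \<Longrightarrow> j<q \<Longrightarrow> i'<p \<Longrightarrow> j'<q \<Longrightarrow> (i,j)\<noteq>(i',j') \<Longrightarrow> \<phi> i j = \<phi> i' j' \<Longrightarrow>
        i\<noteq>i' \<and> j\<noteq>j' \<and> s i j = - s i' j'"
   and g3: "\<And>a b c d a' b' c' d'. adj p q a b c d \<Longrightarrow> adj p q a' b' c' d' \<Longrightarrow> \<phi> a b = \<phi> a' b' \<Longrightarrow>
        \<phi> c d = \<phi> c' d' \<Longrightarrow> sw s a b c d = sw s a' b' c' d'"
    using g unfolding good_def by blast+
  define H :: "nat sgraph" where "H = \<lparr> verts = {0..<N},
     arcs = {(\<phi> a b, \<phi> c d) | a b c d. adj p q a b c d},
     sgn = (\<lambda>x y. SOME v. \<exists>a b c d. adj p q a b c d \<and> \<phi> a b = x \<and> \<phi> c d = y \<and> v = sw s a b c d) \<rparr>"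
  have key: "sgn H (\<phi> a b) (\<phi> c d) = sw s a b c d" if A: "adj p q a b c d" for a b c d
  proof -
    let ?P = "\<lambda>v. \<exists>a' b' c' d'. adj p q a' b' c' d' \<and> \<phi> a' b' = \<phi> a b \<and> \<phi> c' d' = \<phi> c d \<and> v = sw s a' b' c' d'"
    have "?P (sw s a b c d)" using A by blast
    then have "?P (SOME v. ?P v)" by (rule someI)
    then obtain a' b' c' d' where "adj p q a' b' c' d'" "\<phi> a' b' = \<phi> a b" "\<phi> c' d' = \<phi> c d"
       "(SOME v. ?P v) = sw s a' b' c' d'" by blast
    then show ?thesis using g3[OF A] by (simp add: H_def)
  qed
  have swpm: "sw s a b c d = 1 \<or> sw s a b c d = -1" if A: "adj p q a b c d" for a b c d
    using g1[of a b] g1[of c d] A by (auto simp: adj_def sw_def)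
  have adj_sym: "adj p q a b c d \<Longrightarrow> adj p q c d a b" for a b c d by (auto simp: adj_def)
  have s1: "finite (verts H)" by (simp add: H_def)
  have s2: "arcs H \<subseteq> verts H \<times> verts H" using g1 by (auto simp: H_def adj_def)
  have s3: "\<forall>u v. (u,v) \<in> arcs H \<longrightarrow> (v,u) \<in> arcs H"
  proof (intro allI impI)
    fix u v assume "(u,v) \<in> arcs H"
    then obtain a b c d where A: "adj p q a b c d" "u = \<phi> a b" "v = \<phi> c d" by (auto simp: H_def)
    show "(v,u) \<in> arcs H" using adj_sym[OF A(1)] A by (auto simp: H_def)
  qed
  have s4: "\<forall>u v. (u,v) \<in> arcs H \<longrightarrow> sgn H u v \<in> {1,-1} \<and> sgn H u v = sgn H v u"
  proof (intro allI impI)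
    fix u v assume "(u,v) \<in> arcs H"
    then obtain a b c d where A: "adj p q a b c d" "u = \<phi> a b" "v = \<phi> c d" by (auto simp: H_def)
    have e1: "sgn H u v = sw s a b c d" using key[OF A(1)] A by simp
    have e2: "sgn H v u = sw s a b c d" using key[OF adj_sym[OF A(1)]] A sw_sym by metis
    show "sgn H u v \<in> {1,-1} \<and> sgn H u v = sgn H v u"
      using e1 e2 swpm[OF A(1)] by simp
  qed
  have s5: "\<forall>u. (u,u) \<notin> arcs H"
  proof (intro allI notI)
    fix u assume "(u,u) \<in> arcs H"
    then obtain a b c d where A: "adj p q a b c d" "\<phi> a b = \<phi> c d" by (auto simp: H_def)
    then show False using g2[of a b c d] by (auto simp: adj_def)
  qed
  have sgH: "signed_graph H"
    unfolding signed_graph_def using s1 s2 s3 s4 s5 by (intro conjI)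
  define X where "X = {(i,j) | i j. i<p \<and> j<q \<and> s i j = -1}"
  have hom: "sg_hom (Gpq p q) H (\<lambda>(i,j). \<phi> i j)"
    unfolding sg_hom_def
  proof (intro conjI allI impI)
    show "(\<lambda>(i,j). \<phi> i j) ` verts (Gpq p q) \<subseteq> verts H"
      using g1 by (auto simp: verts_G H_def)
  next
    fix u v assume "(u,v) \<in> arcs (Gpq p q)"
    then obtain a b c d where "u = (a,b)" "v = (c,d)" "adj p q a b c d"
      by (cases u, cases v) (auto simp: arcs_G adj_def)
    then show "((\<lambda>(i,j). \<phi> i j) u, (\<lambda>(i,j). \<phi> i j) v) \<in> arcs H" by (auto simp: H_def)
  next
    show "\<exists>X\<subseteq>verts (Gpq p q). \<forall>u v. (u, v) \<in> arcs (Gpq p q) \<longrightarrow>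
        sgn H ((\<lambda>(i,j). \<phi> i j) u) ((\<lambda>(i,j). \<phi> i j) v) = switch X (sgn (Gpq p q)) u v"
    proof (intro exI[of _ X] conjI allI impI)
      show "X \<subseteq> verts (Gpq p q)" by (auto simp: X_def verts_G)
    next
      fix u v assume "(u,v) \<in> arcs (Gpq p q)"
      then obtain a b c d where uv: "u = (a,b)" "v = (c,d)" and A: "adj p q a b c d"
        by (cases u, cases v) (auto simp: arcs_G adj_def)
      have r: "a<p" "b<q" "c<p" "d<q" using A by (auto simp: adj_def)
      have "switch X (sgn (Gpq p q)) u v = sw s a b c d"
        using g1[OF r(1,2)] g1[OF r(3,4)] r uv
        by (auto simp: switch_def sgn_G sw_def X_def)
      then show "sgn H ((\<lambda>(i,j). \<phi> i j) u) ((\<lambda>(i,j). \<phi> i j) v) = switch X (sgn (Gpq p q)) u v"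
        using key[OF A] uv by simp
    qed
  qed
  show ?thesis using sgH hom by (intro exI[of _ H] exI[of _ "\<lambda>(i,j). \<phi> i j"]) (simp add: H_def)
qed


lemma lower:
  assumes sg: "signed_graph H" and hom: "sg_hom (Gpq p q) H \<psi>"
  shows "p*q \<le> 2 * card (verts H)"
proof -
  let ?V = "verts (Gpq p q)"
  have im: "\<psi> ` ?V \<subseteq> verts H" and ar: "\<And>u v. (u,v) \<in> arcs (Gpq p q) \<Longrightarrow> (\<psi> u, \<psi> v) \<in> arcs H"
    using hom unfolding sg_hom_def by blast+
  obtain X where X: "\<And>u v. (u,v) \<in> arcs (Gpq p q) \<Longrightarrow> sgn H (\<psi> u) (\<psi> v) = switch X (sgn (Gpq p q)) u v"
    using hom unfolding sg_hom_def by blast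
  have loop: "(x,x) \<notin> arcs H" for x using sg unfolding signed_graph_def by blast
  define t where "t u = (if u \<in> X then -1 else (1::int))" for u
  have swt: "switch X (sgn (Gpq p q)) u v = sgn (Gpq p q) u v * t u * t v" for u v
    by (simp add: switch_def t_def)
  have diff: "a \<noteq> c \<and> b \<noteq> d" if "(a,b) \<in> ?V" "(c,d) \<in> ?V" "(a,b) \<noteq> (c,d)" "\<psi> (a,b) = \<psi> (c,d)" for a b c d
  proof (rule ccontr)
    assume "\<not> (a \<noteq> c \<and> b \<noteq> d)"
    then have "((a,b),(c,d)) \<in> arcs (Gpq p q)" using that by (auto simp: arcs_G verts_G)
    then show False using ar loop that(4) by metis
  qed
  have flip: "t (c,d) = - t (a,b)" if "(a,b) \<in> ?V" "(c,d) \<in> ?V" "(a,b) \<noteq> (c,d)" "\<psi> (a,b) = \<psi> (c,d)" for a b c d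
  proof -
    have ne: "a \<noteq> c" "b \<noteq> d" using diff[OF that] by auto
    have r: "a<p" "b<q" "c<p" "d<q" using that by (auto simp: verts_G)
    have e1: "((a,b),(a,d)) \<in> arcs (Gpq p q)" and e2: "((c,d),(a,d)) \<in> arcs (Gpq p q)"
      using r ne by (auto simp: arcs_G)
    have "switch X (sgn (Gpq p q)) (a,b) (a,d) = switch X (sgn (Gpq p q)) (c,d) (a,d)"
      using X[OF e1] X[OF e2] that(4) by simp
    then have "- t (a,b) * t (a,d) = t (c,d) * t (a,d)" using ne by (simp add: swt sgn_G)
    moreover have "t (a,d) \<noteq> 0" by (simp add: t_def)
    ultimately show ?thesis by (metis mult_cancel_right mult_minus_left)
  qed
  have flip': "t v = - t u" if "u \<in> ?V" "v \<in> ?V" "u \<noteq> v" "\<psi> u = \<psi> v" for u v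
  proof -
    obtain a b c d where "u = (a,b)" "v = (c,d)" by (cases u, cases v)
    then show ?thesis using flip[of a b c d] that by simp
  qed
  have fib: "card {v \<in> ?V. \<psi> v = y} \<le> 2" for y
  proof (rule ccontr)
    assume "\<not> ?thesis"
    then have "3 \<le> card {v \<in> ?V. \<psi> v = y}" by simp
    then obtain T where T: "T \<subseteq> {v \<in> ?V. \<psi> v = y}" "card T = 3" by (meson obtain_subset_with_card_n)
    from T(2) obtain x1 x2 x3 where x: "T = {x1,x2,x3}" "x1\<noteq>x2" "x2\<noteq>x3" "x1\<noteq>x3"
      unfolding card_3_iff by blast
    have m1: "x1 \<in> ?V" "\<psi> x1 = y" and m2: "x2 \<in> ?V" "\<psi> x2 = y" and m3: "x3 \<in> ?V" "\<psi> x3 = y"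
      using T(1) unfolding x(1) by blast+
    have f1: "t x2 = - t x1" by (rule flip'[OF m1(1) m2(1) x(2)]) (simp add: m1 m2)
    have f2: "t x3 = - t x2" by (rule flip'[OF m2(1) m3(1) x(3)]) (simp add: m2 m3)
    have f3: "t x1 = - t x3" by (rule flip'[OF m3(1) m1(1) x(4)[symmetric]]) (simp add: m1 m3)
    have "t x1 = - t x1" using f1 f2 f3 by linarith
    then have "t x1 = 0" by linarith
    then show False by (simp add: t_def split: if_splits)
  qed
  have finV: "finite ?V" by (simp add: verts_G)
  have finH: "finite (verts H)" using sg unfolding signed_graph_def by blast
  have "?V = (\<Union>y\<in>\<psi> ` ?V. {v \<in> ?V. \<psi> v = y})" by auto
  then have "card ?V \<le> (\<Sum>y\<in>\<psi> ` ?V. card {v \<in> ?V. \<psi> v = y})"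
    using card_UN_le[of "\<psi> ` ?V" "\<lambda>y. {v \<in> ?V. \<psi> v = y}"] finV by simp
  also have "\<dots> \<le> (\<Sum>y\<in>\<psi> ` ?V. 2)" by (rule sum_mono) (rule fib)
  also have "\<dots> = 2 * card (\<psi> ` ?V)" by simp
  also have "\<dots> \<le> 2 * card (verts H)" using card_mono[OF finH im] by simp
  finally show ?thesis by (simp add: verts_G)
qed

lemma ceil_half: "\<lceil>real n / 2\<rceil> = int ((n+1) div 2)"
proof (cases "even n")
  case True
  then obtain m where m: "n = 2*m" by (blast elim: evenE)
  have "(n+1) div 2 = m" using m by simp
  moreover have "real n / 2 = real m" using m by simp
  ultimately show ?thesis by simp
next
  case False
  then obtain m where m: "n = 2*m+1" by (blast elim: oddE)
  have "(n+1) div 2 = m+1" using m by simp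
  moreover have "real n / 2 = real m + 1/2" using m by simp
  moreover have "\<lceil>real m + 1/2\<rceil> = int (m+1)" by (subst ceiling_eq_iff) simp
  ultimately show ?thesis by (simp only:)
qed

theorem theorem5p5:
  fixes p q :: nat
  assumes "p \<ge> 2" and "q \<ge> 2"
  shows "int (chi_s (cprod (Kcomp p 1) (Kcomp q (-1)))) = \<lceil>real (p * q) / 2\<rceil>"
proof -
  let ?N = "(p*q+1) div 2"
  obtain \<phi> s where "good p q ?N \<phi> s" using good_all[OF assms] by blast
  from hom_from_good[OF this] have ex: "\<exists>(H::nat sgraph) \<psi>. signed_graph H \<and> card (verts H) = ?N \<and> sg_hom (Gpq p q) H \<psi>" .
  have "chi_s (Gpq p q) = ?N"
    unfolding chi_s_def
  proof (rule Least_equality)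
    show "\<exists>(H::nat sgraph) \<psi>. signed_graph H \<and> card (verts H) = ?N \<and> sg_hom (Gpq p q) H \<psi>" by (rule ex)
  next
    fix n assume "\<exists>(H::nat sgraph) \<psi>. signed_graph H \<and> card (verts H) = n \<and> sg_hom (Gpq p q) H \<psi>"
    then obtain H :: "nat sgraph" and \<psi> where "signed_graph H" "card (verts H) = n" "sg_hom (Gpq p q) H \<psi>" by blast
    then have "p*q \<le> 2*n" using lower by metis
    then show "?N \<le> n" by simp
  qed
  then show ?thesis by (subst ceil_half) (simp only: \<open>chi_s (Gpq p q) = ?N\<close>)
qed

end
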